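(* For every formula $F$ of $\mathcal{L}$: if $F$ is valid in every neighbourhood model, then $F$ is derivable in the axiom system of $\mathbb{PCL}$.
   Context: Formulas: $\mathcal{L} ::= p \mid \bot \mid A\wedge B \mid A\lor B \mid A\rightarrow B \mid A>B$. The axiom system of $\mathbb{PCL}$ is classical propositional logic plus the rules (RCEA) from $A\leftrightarrow B$ infer $(A>C)\leftrightarrow(B>C)$; (RCK) from $A\rightarrow B$ infer $(C>A)\rightarrow(C>B)$, and the axioms (ID) $A>A$; (R-And) $(A>B)\wedge(A>C)\rightarrow(A>(B\wedge C))$; (CM) $(A>B)\wedge(A>C)\rightarrow((A\wedge B)>C)$; (OR) $(A>C)\wedge(B>C)\rightarrow((A\lor B)>C)$. A neighbourhood model is $\langle W,N,\llbracket\cdot\rrbracket\rangle$ with $W\neq\emptyset$, $N:W\to\mathcal{P}(\mathcal{P}(W))$ such that every $\alpha\in N(x)$ is non-empty, and a valuation of atoms. Forcing is classical for Boolean connectives, and $x\Vdash A>B$ iff for all $\alpha\in N(x)$, if some $y\in\alpha$ forces $A$, then there is $\beta\in N(x)$ with $\beta\subseteq\alpha$ such that some $y\in\beta$ forces $A$ and every $y\in\beta$ forces $A\to B$. Valid = forced at every world. *)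

theory Defs
  imports Main
begin

datatype 'a fm =
    Atom 'a
  | Bot
  | And "'a fm" "'a fm"
  | Or "'a fm" "'a fm"
  | Imp "'a fm" "'a fm"
  | Cond "'a fm" "'a fm"

definition Iff :: "'a fm \<Rightarrow> 'a fm \<Rightarrow> 'a fm" where
  "Iff A B = And (Imp A B) (Imp B A)"

fun peval :: "('a fm \<Rightarrow> bool) \<Rightarrow> 'a fm \<Rightarrow> bool" where
  "peval v (Atom p) = v (Atom p)"
| "peval v Bot = False"
| "peval v (And A B) = (peval v A \<and> peval v B)"
| "peval v (Or A B) = (peval v A \<or> peval v B)"
| "peval v (Imp A B) = (peval v A \<longrightarrow> peval v B)"
| "peval v (Cond A B) = v (Cond A B)"

definition tautology :: "'a fm \<Rightarrow> bool" where
  "tautology A \<longleftrightarrow> (\<forall>v. peval v A)"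

inductive PCL :: "'a fm \<Rightarrow> bool" where
  Taut: "tautology A \<Longrightarrow> PCL A"
| MP: "PCL (Imp A B) \<Longrightarrow> PCL A \<Longrightarrow> PCL B"
| RCEA: "PCL (Iff A B) \<Longrightarrow> PCL (Iff (Cond A C) (Cond B C))"
| RCK: "PCL (Imp A B) \<Longrightarrow> PCL (Imp (Cond C A) (Cond C B))"
| ID: "PCL (Cond A A)"
| RAnd: "PCL (Imp (And (Cond A B) (Cond A C)) (Cond A (And B C)))"
| CM: "PCL (Imp (And (Cond A B) (Cond A C)) (Cond (And A B) C))"
| OR: "PCL (Imp (And (Cond A C) (Cond B C)) (Cond (Or A B) C))"

definition nbhd_model :: "'w set \<Rightarrow> ('w \<Rightarrow> 'w set set) \<Rightarrow> ('a \<Rightarrow> 'w set) \<Rightarrow> bool" where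
  "nbhd_model W N V \<longleftrightarrow>
     W \<noteq> {} \<and>
     (\<forall>x\<in>W. \<forall>\<alpha>\<in>N x. \<alpha> \<noteq> {} \<and> \<alpha> \<subseteq> W) \<and>
     (\<forall>p. V p \<subseteq> W)"

fun forces :: "('w \<Rightarrow> 'w set set) \<Rightarrow> ('a \<Rightarrow> 'w set) \<Rightarrow> 'w \<Rightarrow> 'a fm \<Rightarrow> bool" where
  "forces N V x (Atom p) = (x \<in> V p)"
| "forces N V x Bot = False"
| "forces N V x (And A B) = (forces N V x A \<and> forces N V x B)"
| "forces N V x (Or A B) = (forces N V x A \<or> forces N V x B)"
| "forces N V x (Imp A B) = (forces N V x A \<longrightarrow> forces N V x B)"
| "forces N V x (Cond A B) =
     (\<forall>\<alpha>\<in>N x. (\<exists>y\<in>\<alpha>. forces N V y A) \<longrightarrow>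
        (\<exists>\<beta>\<in>N x. \<beta> \<subseteq> \<alpha> \<and> (\<exists>y\<in>\<beta>. forces N V y A) \<and>
                   (\<forall>y\<in>\<beta>. forces N V y A \<longrightarrow> forces N V y B)))"

definition valid_in :: "'w set \<Rightarrow> ('w \<Rightarrow> 'w set set) \<Rightarrow> ('a \<Rightarrow> 'w set) \<Rightarrow> 'a fm \<Rightarrow> bool" where
  "valid_in W N V A \<longleftrightarrow> (\<forall>x\<in>W. forces N V x A)"

end

theory Submission
  imports Defs
begin


fun conjs :: "'a fm list \<Rightarrow> 'a fm" where
  "conjs [] = Imp Bot Bot"
| "conjs (B # L) = And B (conjs L)"

lemma peval_conjs[simp]: "peval v (conjs L) = (\<forall>B\<in>set L. peval v B)"
  by (induction L) auto

lemma peval_Iff[simp]: "peval v (Iff A B) = (peval v A = peval v B)"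
  by (auto simp: Iff_def)

lemma taut_PCL: "(\<And>v. peval v A) \<Longrightarrow> PCL A"
  by (rule PCL.Taut) (simp add: tautology_def)

lemma PCL_prop1: "PCL X \<Longrightarrow> (\<And>v. peval v X \<Longrightarrow> peval v Z) \<Longrightarrow> PCL Z"
proof -
  assume a: "PCL X" "\<And>v. peval v X \<Longrightarrow> peval v Z"
  then have "PCL (Imp X Z)" by (intro taut_PCL) auto
  then show "PCL Z" using a(1) by (rule PCL.MP)
qed

lemma PCL_prop2: "PCL X \<Longrightarrow> PCL Y \<Longrightarrow> (\<And>v. peval v X \<Longrightarrow> peval v Y \<Longrightarrow> peval v Z) \<Longrightarrow> PCL Z"
proof -
  assume a: "PCL X" "PCL Y" "\<And>v. peval v X \<Longrightarrow> peval v Y \<Longrightarrow> peval v Z"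
  then have "PCL (Imp X (Imp Y Z))" by (intro taut_PCL) auto
  then have "PCL (Imp Y Z)" using a(1) by (rule PCL.MP)
  then show "PCL Z" using a(2) by (rule PCL.MP)
qed

definition deriv :: "'a fm set \<Rightarrow> 'a fm \<Rightarrow> bool" where
  "deriv G A \<longleftrightarrow> (\<exists>L. set L \<subseteq> G \<and> PCL (Imp (conjs L) A))"

definition cons :: "'a fm set \<Rightarrow> bool" where
  "cons G \<longleftrightarrow> \<not> deriv G Bot"

definition mcs :: "'a fm set \<Rightarrow> bool" where
  "mcs G \<longleftrightarrow> cons G \<and> (\<forall>A. A \<notin> G \<longrightarrow> \<not> cons (insert A G))"

lemma mcs_deriv:
  assumes m: "mcs G" and d: "deriv G A" shows "A \<in> G"
proof (rule ccontr)
  assume "A \<notin> G"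
  with m have "deriv (insert A G) Bot" unfolding mcs_def cons_def by blast
  then obtain L1 where L1: "set L1 \<subseteq> insert A G" "PCL (Imp (conjs L1) Bot)"
    unfolding deriv_def by blast
  from d obtain L2 where L2: "set L2 \<subseteq> G" "PCL (Imp (conjs L2) A)"
    unfolding deriv_def by blast
  let ?L = "filter (\<lambda>B. B \<noteq> A) L1 @ L2"
  have "set ?L \<subseteq> G" using L1 L2 by auto
  moreover have "PCL (Imp (conjs ?L) Bot)"
    using L1(2) L2(2) by (rule PCL_prop2) auto
  ultimately have "deriv G Bot" unfolding deriv_def by blast
  with m show False unfolding mcs_def cons_def by blast
qed

lemma mcs_derivL:
  assumes "mcs G" "set L \<subseteq> G" "\<And>v. (\<forall>B\<in>set L. peval v B) \<Longrightarrow> peval v A"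
  shows "A \<in> G"
proof -
  have "PCL (Imp (conjs L) A)" using assms(3) by (intro taut_PCL) auto
  then show ?thesis using assms(1,2) mcs_deriv unfolding deriv_def by blast
qed

lemma mcs_thm: assumes m: "mcs G" and p: "PCL A" shows "A \<in> G"
proof -
  have "PCL (Imp (conjs []) A)" by (rule PCL_prop1[OF p]) simp
  then have "deriv G A" unfolding deriv_def by (intro exI[of _ "[]"]) simp
  then show ?thesis by (rule mcs_deriv[OF m])
qed

lemma mcs_mp: assumes m: "mcs G" and p: "PCL (Imp X Y)" and xg: "X \<in> G" shows "Y \<in> G"
proof -
  have "PCL (Imp (conjs [X]) Y)" by (rule PCL_prop1[OF p]) simp
  then have "deriv G Y" unfolding deriv_def using xg by (intro exI[of _ "[X]"]) simp
  then show ?thesis by (rule mcs_deriv[OF m])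
qed

lemma mcs_Bot: assumes m: "mcs G" shows "Bot \<notin> G"
proof
  assume b: "Bot \<in> G"
  have "PCL (Imp (conjs [Bot]) Bot)" by (rule taut_PCL) simp
  then have "deriv G Bot" unfolding deriv_def using b by (intro exI[of _ "[Bot]"]) simp
  then show False using m unfolding mcs_def cons_def by blast
qed

lemma mcs_neg: assumes m: "mcs G" and n: "A \<notin> G" shows "Imp A Bot \<in> G"
proof -
  from m n have "deriv (insert A G) Bot" unfolding mcs_def cons_def by blast
  then obtain L1 where L1: "set L1 \<subseteq> insert A G" "PCL (Imp (conjs L1) Bot)"
    unfolding deriv_def by blast
  let ?L = "filter (\<lambda>B. B \<noteq> A) L1"
  have "set ?L \<subseteq> G" using L1 by auto
  moreover have "PCL (Imp (conjs ?L) (Imp A Bot))"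
    using L1(2) by (rule PCL_prop1) auto
  ultimately show ?thesis using mcs_deriv[OF m] unfolding deriv_def by blast
qed

lemma mcs_notboth: assumes m: "mcs G" and a: "A \<in> G" "Imp A Bot \<in> G" shows False
proof -
  have "Bot \<in> G" by (rule mcs_derivL[OF m, of "[A, Imp A Bot]"]) (use a in auto)
  then show False using mcs_Bot[OF m] by blast
qed

lemma mcs_And: assumes m: "mcs G" shows "And A B \<in> G \<longleftrightarrow> A \<in> G \<and> B \<in> G"
proof
  assume a: "And A B \<in> G"
  have "A \<in> G" by (rule mcs_derivL[OF m, of "[And A B]"]) (use a in auto)
  moreover have "B \<in> G" by (rule mcs_derivL[OF m, of "[And A B]"]) (use a in auto)
  ultimately show "A \<in> G \<and> B \<in> G" ..
next
  assume a: "A \<in> G \<and> B \<in> G"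
  show "And A B \<in> G" by (rule mcs_derivL[OF m, of "[A, B]"]) (use a in auto)
qed

lemma mcs_Or: assumes m: "mcs G" shows "Or A B \<in> G \<longleftrightarrow> A \<in> G \<or> B \<in> G"
proof
  assume a: "Or A B \<in> G"
  show "A \<in> G \<or> B \<in> G"
  proof (rule ccontr)
    assume "\<not> (A \<in> G \<or> B \<in> G)"
    then have "Imp A Bot \<in> G" "Imp B Bot \<in> G" using mcs_neg[OF m] by auto
    then have "Bot \<in> G" by (intro mcs_derivL[OF m, of "[Or A B, Imp A Bot, Imp B Bot]"]) (use a in auto)
    then show False using mcs_Bot[OF m] by blast
  qed
next
  assume a: "A \<in> G \<or> B \<in> G"
  then show "Or A B \<in> G"
  proof
    assume "A \<in> G" then show ?thesis by (intro mcs_derivL[OF m, of "[A]"]) auto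
  next
    assume "B \<in> G" then show ?thesis by (intro mcs_derivL[OF m, of "[B]"]) auto
  qed
qed

lemma mcs_Imp: assumes m: "mcs G" shows "Imp A B \<in> G \<longleftrightarrow> (A \<in> G \<longrightarrow> B \<in> G)"
proof
  assume a: "Imp A B \<in> G"
  show "A \<in> G \<longrightarrow> B \<in> G"
  proof
    assume "A \<in> G"
    then show "B \<in> G" by (intro mcs_derivL[OF m, of "[Imp A B, A]"]) (use a in auto)
  qed
next
  assume a: "A \<in> G \<longrightarrow> B \<in> G"
  show "Imp A B \<in> G"
  proof (cases "A \<in> G")
    case True
    then have "B \<in> G" using a by blast
    then show ?thesis by (intro mcs_derivL[OF m, of "[B]"]) auto
  next
    case False
    then have "Imp A Bot \<in> G" by (rule mcs_neg[OF m])
    then show ?thesis by (intro mcs_derivL[OF m, of "[Imp A Bot]"]) auto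
  qed
qed

lemma lindenbaum:
  assumes c: "cons G" shows "\<exists>M. mcs M \<and> G \<subseteq> M"
proof -
  let ?A = "{D. G \<subseteq> D \<and> cons D}"
  have "\<forall>C\<in>chains ?A. \<exists>U\<in>?A. \<forall>X\<in>C. X \<subseteq> U"
  proof
    fix C assume C: "C \<in> chains ?A"
    show "\<exists>U\<in>?A. \<forall>X\<in>C. X \<subseteq> U"
    proof (cases "C = {}")
      case True then show ?thesis using c by auto
    next
      case False
      have "cons (\<Union>C)" unfolding cons_def deriv_def
      proof
        assume "\<exists>L. set L \<subseteq> \<Union>C \<and> PCL (Imp (conjs L) Bot)"
        then obtain L where L: "set L \<subseteq> \<Union>C" "PCL (Imp (conjs L) Bot)" by blast
        have "subset.chain UNIV C" using C unfolding chains_def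
          by (simp add: chain_subset_alt_def)
        then obtain B where "B \<in> C" "set L \<subseteq> B"
          using finite_subset_Union_chain[of "set L" C UNIV] L(1) False by auto
        then show False using C L(2) unfolding chains_def cons_def deriv_def by blast
      qed
      moreover obtain X where "X \<in> C" using False by blast
      then have "G \<subseteq> \<Union>C" using C unfolding chains_def by blast
      ultimately show ?thesis by blast
    qed
  qed
  then obtain M where M: "M \<in> ?A" "\<forall>X\<in>?A. M \<subseteq> X \<longrightarrow> X = M"
    using Zorn_Lemma2[of ?A] by blast
  have "mcs M" unfolding mcs_def
  proof (intro conjI allI impI)
    show "cons M" using M by auto
  next
    fix A assume "A \<notin> M"
    then show "\<not> cons (insert A M)" using M by blast
  qed
  then show ?thesis using M by auto
qed



context
  fixes x :: "'a fm set"
  assumes mx: "mcs x"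
begin

lemma c_ref: "Cond A A \<in> x"
  using mcs_thm[OF mx PCL.ID] .

lemma c_rw: "(\<And>v. peval v B \<Longrightarrow> peval v C) \<Longrightarrow> Cond A B \<in> x \<Longrightarrow> Cond A C \<in> x"
proof -
  assume a: "\<And>v. peval v B \<Longrightarrow> peval v C" "Cond A B \<in> x"
  have "PCL (Imp B C)" using a(1) by (intro taut_PCL) auto
  then have "PCL (Imp (Cond A B) (Cond A C))" by (rule PCL.RCK)
  then show ?thesis by (rule mcs_mp[OF mx _ a(2)])
qed

lemma c_lle: "(\<And>v. peval v A = peval v A') \<Longrightarrow> Cond A C \<in> x \<Longrightarrow> Cond A' C \<in> x"
proof -
  assume a: "\<And>v. peval v A = peval v A'" "Cond A C \<in> x"
  have "PCL (Iff A A')" using a(1) by (intro taut_PCL) auto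
  then have "PCL (Iff (Cond A C) (Cond A' C))" by (rule PCL.RCEA)
  then have "PCL (Imp (Cond A C) (Cond A' C))" by (rule PCL_prop1) auto
  then show ?thesis by (rule mcs_mp[OF mx _ a(2)])
qed

lemma c_and: assumes a: "Cond A B \<in> x" "Cond A C \<in> x" shows "Cond A (And B C) \<in> x"
proof -
  have "Imp (And (Cond A B) (Cond A C)) (Cond A (And B C)) \<in> x" by (rule mcs_thm[OF mx PCL.RAnd])
  then show ?thesis using a by (simp add: mcs_Imp[OF mx] mcs_And[OF mx])
qed

lemma c_cm: assumes a: "Cond A B \<in> x" "Cond A C \<in> x" shows "Cond (And A B) C \<in> x"
proof -
  have "Imp (And (Cond A B) (Cond A C)) (Cond (And A B) C) \<in> x" by (rule mcs_thm[OF mx PCL.CM])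
  then show ?thesis using a by (simp add: mcs_Imp[OF mx] mcs_And[OF mx])
qed

lemma c_or: assumes a: "Cond A C \<in> x" "Cond B C \<in> x" shows "Cond (Or A B) C \<in> x"
proof -
  have "Imp (And (Cond A C) (Cond B C)) (Cond (Or A B) C) \<in> x" by (rule mcs_thm[OF mx PCL.OR])
  then show ?thesis using a by (simp add: mcs_Imp[OF mx] mcs_And[OF mx])
qed

lemma c_cut:
  assumes t: "Cond T X \<in> x" and tx: "Cond (And T X) Y \<in> x"
  shows "Cond T Y \<in> x"
proof -
  have 1: "Cond (And T X) (Imp X Y) \<in> x" by (rule c_rw[OF _ tx]) auto
  have 2: "Cond (And T (Imp X Bot)) (Imp X Y) \<in> x"
    by (rule c_rw[OF _ c_ref]) auto
  have "Cond (Or (And T X) (And T (Imp X Bot))) (Imp X Y) \<in> x" using c_or[OF 1 2] .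
  then have "Cond T (Imp X Y) \<in> x" by (rule c_lle[rotated]) auto
  then have "Cond T (And X (Imp X Y)) \<in> x" using c_and[OF t] by blast
  then show ?thesis by (rule c_rw[rotated]) auto
qed

lemma L1: assumes "Cond A B \<in> x" shows "Cond (Or A al) (Imp A B) \<in> x"
proof -
  have 1: "Cond A (Imp A B) \<in> x" by (rule c_rw[OF _ assms]) auto
  have 2: "Cond (And al (Imp A Bot)) (Imp A B) \<in> x" by (rule c_rw[OF _ c_ref]) auto
  show ?thesis using c_or[OF 1 2] by (rule c_lle[rotated]) auto
qed

lemma L3: assumes "Cond (Or d A) d \<in> x" "Cond A B \<in> x" shows "Cond d (Imp A B) \<in> x"
proof -
  have "Cond (Or d A) (Imp A B) \<in> x" using L1[OF assms(2), of d] by (rule c_lle[rotated]) auto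
  then have "Cond (And (Or d A) d) (Imp A B) \<in> x" using c_cm[OF assms(1)] by blast
  then show ?thesis by (rule c_lle[rotated]) auto
qed

lemma L2: assumes "Cond (Or A al) (Imp A al) \<in> x" shows "Cond (Or al A) al \<in> x"
proof -
  have "Cond (Or A al) (And (Or A al) (Imp A al)) \<in> x" using c_and[OF c_ref assms] .
  then have "Cond (Or A al) al \<in> x" by (rule c_rw[rotated]) auto
  then show ?thesis by (rule c_lle[rotated]) auto
qed

lemma L4: assumes "Cond (Or d b) d \<in> x" "Cond (Or b a) b \<in> x" shows "Cond (Or d a) d \<in> x"
proof -
  let ?T = "Or (Or d b) (Or b a)"
  have 1: "Cond (Or b a) (Or d b) \<in> x" by (rule c_rw[OF _ assms(2)]) auto
  have 2: "Cond ?T (Or d b) \<in> x" using c_or[OF c_ref 1] .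
  have 3: "Cond (And ?T (Or d b)) d \<in> x" using assms(1) by (rule c_lle[rotated]) auto
  have 4: "Cond ?T d \<in> x" using c_cut[OF 2 3] .
  have 5: "Cond ?T (Or d a) \<in> x" by (rule c_rw[OF _ 4]) auto
  have "Cond (And ?T (Or d a)) d \<in> x" using c_cm[OF 5 4] .
  then show ?thesis by (rule c_lle[rotated]) auto
qed

lemma cond_conjs: "set L \<subseteq> {b. Cond a b \<in> x} \<Longrightarrow> Cond a (conjs L) \<in> x"
proof (induction L)
  case Nil
  show ?case by (rule c_rw[OF _ c_ref]) auto
next
  case (Cons B L)
  then show ?case using c_and by auto
qed

lemma L5: assumes "Cond a C \<notin> x"
  shows "\<exists>k. mcs k \<and> (\<forall>b. Cond a b \<in> x \<longrightarrow> b \<in> k) \<and> C \<notin> k"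
proof -
  let ?G = "insert (Imp C Bot) {b. Cond a b \<in> x}"
  have "cons ?G" unfolding cons_def deriv_def
  proof
    assume "\<exists>L. set L \<subseteq> ?G \<and> PCL (Imp (conjs L) Bot)"
    then obtain L where L: "set L \<subseteq> ?G" "PCL (Imp (conjs L) Bot)" by blast
    let ?L = "filter (\<lambda>B. B \<noteq> Imp C Bot) L"
    have "set ?L \<subseteq> {b. Cond a b \<in> x}" using L(1) by auto
    then have c: "Cond a (conjs ?L) \<in> x" by (rule cond_conjs)
    have "PCL (Imp (conjs ?L) C)" using L(2) by (rule PCL_prop1) auto
    then have "PCL (Imp (Cond a (conjs ?L)) (Cond a C))" by (rule PCL.RCK)
    then have "Cond a C \<in> x" by (rule mcs_mp[OF mx _ c])
    with assms show False by blast
  qed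
  then obtain k where k: "mcs k" "?G \<subseteq> k" using lindenbaum by blast
  then have "C \<notin> k" using mcs_notboth[OF k(1), of C] by auto
  then show ?thesis using k by blast
qed

end



definition nx :: "'a fm set \<Rightarrow> 'a fm \<Rightarrow> 'a fm set set" where
  "nx x al = {k. mcs k \<and> (\<forall>b. Cond al b \<in> x \<longrightarrow> b \<in> k)}"

definition down :: "'a fm set \<Rightarrow> 'a fm set \<Rightarrow> 'a fm \<Rightarrow> ('a fm set \<times> 'a fm) set" where
  "down x m al = insert (m, al) {(k, d). k \<in> nx x d \<and> Cond (Or d al) d \<in> x \<and> al \<notin> k}"

definition Nc :: "'a fm set \<times> 'a fm \<Rightarrow> ('a fm set \<times> 'a fm) set set" where
  "Nc w = {down (fst w) m al | m al. m \<in> nx (fst w) al}"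

definition Wc :: "('a fm set \<times> 'a fm) set" where
  "Wc = {w. mcs (fst w)}"

definition Vc :: "'a \<Rightarrow> ('a fm set \<times> 'a fm) set" where
  "Vc p = {w. mcs (fst w) \<and> Atom p \<in> fst w}"

lemma cond_sem:
  assumes mx: "mcs x"
  shows "Cond A B \<in> x \<longleftrightarrow> (\<forall>U\<in>Nc (x,t). (\<exists>y\<in>U. A \<in> fst y) \<longrightarrow>
           (\<exists>V\<in>Nc (x,t). V \<subseteq> U \<and> (\<exists>y\<in>V. A \<in> fst y) \<and> (\<forall>y\<in>V. A \<in> fst y \<longrightarrow> B \<in> fst y)))"
proof
  assume ab: "Cond A B \<in> x"
  show "\<forall>U\<in>Nc (x,t). (\<exists>y\<in>U. A \<in> fst y) \<longrightarrow>
           (\<exists>V\<in>Nc (x,t). V \<subseteq> U \<and> (\<exists>y\<in>V. A \<in> fst y) \<and> (\<forall>y\<in>V. A \<in> fst y \<longrightarrow> B \<in> fst y))"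
  proof (intro ballI impI)
    fix U assume U: "U \<in> Nc (x,t)" and touch: "\<exists>y\<in>U. A \<in> fst y"
    then obtain m al where Ud: "U = down x m al" and m: "m \<in> nx x al" unfolding Nc_def by auto
    have mm: "mcs m" using m unfolding nx_def by blast
    show "\<exists>V\<in>Nc (x,t). V \<subseteq> U \<and> (\<exists>y\<in>V. A \<in> fst y) \<and> (\<forall>y\<in>V. A \<in> fst y \<longrightarrow> B \<in> fst y)"
    proof (cases "Cond (Or A al) (Imp A al) \<in> x")
      case True
      have l2: "Cond (Or al A) al \<in> x" using L2[OF mx True] .
      have "\<forall>y\<in>U. A \<in> fst y \<longrightarrow> B \<in> fst y"
      proof (intro ballI impI)
        fix y assume y: "y \<in> U" "A \<in> fst y"
        show "B \<in> fst y"
        proof (cases "y = (m, al)")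
          case True
          have "Cond al (Imp A B) \<in> x" using L3[OF mx l2 ab] .
          then have "Imp A B \<in> m" using m unfolding nx_def by blast
          then show ?thesis using y(2) True mcs_Imp[OF mm] by simp
        next
          case False
          then obtain k d where yk: "y = (k,d)" "k \<in> nx x d" "Cond (Or d al) d \<in> x"
            using y Ud unfolding down_def by auto
          have "Cond (Or d A) d \<in> x" using L4[OF mx yk(3) l2] .
          then have "Cond d (Imp A B) \<in> x" using L3[OF mx _ ab] by blast
          then have "Imp A B \<in> k" "mcs k" using yk(2) unfolding nx_def by auto
          then show ?thesis using y(2) yk(1) mcs_Imp[of k A B] by simp
        qed
      qed
      then show ?thesis using U touch by blast
    next
      case False
      obtain k where k: "mcs k" "\<forall>b. Cond (Or A al) b \<in> x \<longrightarrow> b \<in> k" "Imp A al \<notin> k"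
        using L5[OF mx False] by blast
      have kn: "k \<in> nx x (Or A al)" using k unfolding nx_def by blast
      have Ak: "A \<in> k" and alk: "al \<notin> k" using k(3) mcs_Imp[OF k(1)] by auto
      let ?V = "down x k (Or A al)"
      have V: "?V \<in> Nc (x,t)" using kn unfolding Nc_def by auto
      have le1: "Cond (Or (Or A al) al) (Or A al) \<in> x"
        by (rule c_lle[OF mx _ c_ref[OF mx]]) auto
      have sub: "?V \<subseteq> U"
      proof
        fix y assume y: "y \<in> ?V"
        show "y \<in> U"
        proof (cases "y = (k, Or A al)")
          case True then show ?thesis using Ud kn le1 alk unfolding down_def by auto
        next
          case False
          then obtain j d where yj: "y = (j,d)" "j \<in> nx x d" "Cond (Or d (Or A al)) d \<in> x" "Or A al \<notin> j"
            using y unfolding down_def by auto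
          have "mcs j" using yj(2) unfolding nx_def by auto
          then have "al \<notin> j" using yj(4) mcs_Or[of j A al] by simp
          moreover have "Cond (Or d al) d \<in> x" using L4[OF mx yj(3) le1] .
          ultimately show ?thesis using Ud yj unfolding down_def by auto
        qed
      qed
      have allB: "\<forall>y\<in>?V. A \<in> fst y \<longrightarrow> B \<in> fst y"
      proof (intro ballI impI)
        fix y assume y: "y \<in> ?V" "A \<in> fst y"
        show "B \<in> fst y"
        proof (cases "y = (k, Or A al)")
          case True
          have "Cond (Or A al) (Imp A B) \<in> x" using L1[OF mx ab] .
          then have "Imp A B \<in> k" using k(2) by blast
          then show ?thesis using True Ak mcs_Imp[OF k(1)] by simp
        next
          case False
          then obtain j d where yj: "y = (j,d)" "j \<in> nx x d" "Or A al \<notin> j"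
            using y unfolding down_def by auto
          have "mcs j" using yj(2) unfolding nx_def by auto
          then have "A \<notin> j" using yj(3) mcs_Or[of j A al] by simp
          then show ?thesis using yj(1) y(2) by simp
        qed
      qed
      have "(k, Or A al) \<in> ?V" unfolding down_def by simp
      then have "\<exists>y\<in>?V. A \<in> fst y" using Ak by force
      then show ?thesis using V sub allB by blast
    qed
  qed
next
  assume R: "\<forall>U\<in>Nc (x,t). (\<exists>y\<in>U. A \<in> fst y) \<longrightarrow>
           (\<exists>V\<in>Nc (x,t). V \<subseteq> U \<and> (\<exists>y\<in>V. A \<in> fst y) \<and> (\<forall>y\<in>V. A \<in> fst y \<longrightarrow> B \<in> fst y))"
  show "Cond A B \<in> x"
  proof (rule ccontr)
    assume "Cond A B \<notin> x"
    then obtain m where m: "mcs m" "\<forall>b. Cond A b \<in> x \<longrightarrow> b \<in> m" "B \<notin> m"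
      using L5[OF mx] by blast
    have mn: "m \<in> nx x A" using m unfolding nx_def by blast
    have Am: "A \<in> m" using m(2) c_ref[OF mx] by blast
    let ?U = "down x m A"
    have U: "?U \<in> Nc (x,t)" using mn unfolding Nc_def by auto
    have "(m, A) \<in> ?U" by (simp add: down_def)
    then have "\<exists>y\<in>?U. A \<in> fst y" using Am by force
    then obtain V where V: "V \<in> Nc (x,t)" "V \<subseteq> ?U" "\<exists>y\<in>V. A \<in> fst y" "\<forall>y\<in>V. A \<in> fst y \<longrightarrow> B \<in> fst y"
      using R U by blast
    then obtain y where y: "y \<in> V" "A \<in> fst y" by blast
    have "y = (m, A)" using V(2) y unfolding down_def by auto
    then show False using V(4) y m(3) by auto
  qed
qed



lemma Nc_sub: "U \<in> Nc w \<Longrightarrow> U \<subseteq> Wc"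
  unfolding Nc_def down_def Wc_def nx_def by auto

lemma truth: "w \<in> Wc \<Longrightarrow> forces Nc Vc w F \<longleftrightarrow> F \<in> fst w"
proof (induction F arbitrary: w)
  case (Atom p) then show ?case by (simp add: Vc_def Wc_def)
next
  case Bot then show ?case using mcs_Bot[of "fst w"] by (simp add: Wc_def)
next
  case (And A B) then show ?case using mcs_And[of "fst w" A B] by (simp add: Wc_def)
next
  case (Or A B) then show ?case using mcs_Or[of "fst w" A B] by (simp add: Wc_def)
next
  case (Imp A B) then show ?case using mcs_Imp[of "fst w" A B] by (simp add: Wc_def)
next
  case (Cond A B)
  obtain x t where w: "w = (x,t)" by (cases w)
  have mx: "mcs x" using Cond.prems w unfolding Wc_def by auto
  have eqA: "\<And>U y. U \<in> Nc w \<Longrightarrow> y \<in> U \<Longrightarrow> forces Nc Vc y A \<longleftrightarrow> A \<in> fst y"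
    using Cond.IH(1) Nc_sub by blast
  have eqB: "\<And>U y. U \<in> Nc w \<Longrightarrow> y \<in> U \<Longrightarrow> forces Nc Vc y B \<longleftrightarrow> B \<in> fst y"
    using Cond.IH(2) Nc_sub by blast
  have "forces Nc Vc w (Cond A B) \<longleftrightarrow> (\<forall>U\<in>Nc w. (\<exists>y\<in>U. A \<in> fst y) \<longrightarrow>
           (\<exists>V\<in>Nc w. V \<subseteq> U \<and> (\<exists>y\<in>V. A \<in> fst y) \<and> (\<forall>y\<in>V. A \<in> fst y \<longrightarrow> B \<in> fst y)))"
  proof -
    have k1: "\<And>U. U \<in> Nc w \<Longrightarrow> (\<exists>y\<in>U. forces Nc Vc y A) = (\<exists>y\<in>U. A \<in> fst y)"
      using eqA by blast
    have k2: "\<And>U. U \<in> Nc w \<Longrightarrow> (\<forall>y\<in>U. forces Nc Vc y A \<longrightarrow> forces Nc Vc y B) = (\<forall>y\<in>U. A \<in> fst y \<longrightarrow> B \<in> fst y)"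
      using eqA eqB by blast
    show ?thesis unfolding forces.simps
      by (simp add: k1 k2 cong: ball_cong_simp bex_cong_simp conj_cong)
  qed
  then show ?case using cond_sem[OF mx, of A B t] w by simp
qed



lemma ball_img: "(\<forall>x\<in>g ` S. P x) = (\<forall>y\<in>S. P (g y))" by auto
lemma bex_img: "(\<exists>x\<in>g ` S. P x) = (\<exists>y\<in>S. P (g y))" by auto

lemma forces_inj:
  assumes inj: "inj f"
  shows "forces (\<lambda>v. (`) f ` N (inv f v)) (\<lambda>p. f ` V p) (f w) F \<longleftrightarrow> forces N V w F"
proof (induction F arbitrary: w)
  case (Atom p) then show ?case using inj by (simp add: inj_image_mem_iff)
next
  case Bot then show ?case by simp
next
  case (And A B) then show ?case by simp
next
  case (Or A B) then show ?case by simp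
next
  case (Imp A B) then show ?case by simp
next
  case (Cond A B)
  have iv: "inv f (f w) = w" using inj by simp
  show ?case
    unfolding forces.simps iv
    by (simp only: ball_img bex_img Cond.IH inj_image_subset_iff[OF inj])
qed


definition enc :: "'a fm set \<times> 'a fm \<Rightarrow> 'a fm set" where
  "enc w = insert (Or (snd w) (snd w)) ((\<lambda>X. And X X) ` fst w)"

lemma enc_And: "And X X \<in> enc w \<longleftrightarrow> X \<in> fst w"
  unfolding enc_def by auto

lemma enc_Or: "Or a a \<in> enc w \<longleftrightarrow> a = snd w"
  unfolding enc_def by auto

lemma inj_enc: "inj enc"
proof (rule injI)
  fix u w :: "'a fm set \<times> 'a fm"
  assume e: "enc u = enc w"
  have "Or (snd u) (snd u) \<in> enc u" by (simp add: enc_Or)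
  then have "Or (snd u) (snd u) \<in> enc w" by (simp only: e)
  then have 1: "snd u = snd w" by (simp only: enc_Or)
  have 2: "fst u = fst w"
  proof
    show "fst u \<subseteq> fst w"
    proof
      fix X assume "X \<in> fst u"
      then have "And X X \<in> enc u" by (simp only: enc_And)
      then have "And X X \<in> enc w" by (simp only: e)
      then show "X \<in> fst w" by (simp only: enc_And)
    qed
    show "fst w \<subseteq> fst u"
    proof
      fix X assume "X \<in> fst w"
      then have "And X X \<in> enc w" by (simp only: enc_And)
      then have "And X X \<in> enc u" by (simp only: e)
      then show "X \<in> fst u" by (simp only: enc_And)
    qed
  qed
  show "u = w" using 1 2 by (simp add: prod_eq_iff)
qed

lemma Nc_nonempty: "U \<in> Nc w \<Longrightarrow> U \<noteq> {}"
  unfolding Nc_def down_def by auto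

theorem mainTheorem2:
  fixes F :: "'a fm"
  assumes "\<And>(W :: 'a fm set set) N V. nbhd_model W N V \<Longrightarrow> valid_in W N V F"
  shows "PCL F"
proof (rule ccontr)
  assume nF: "\<not> PCL F"
  have "cons {Imp F Bot}"
    unfolding cons_def deriv_def
  proof
    assume "\<exists>L. set L \<subseteq> {Imp F Bot} \<and> PCL (Imp (conjs L) Bot)"
    then obtain L where L: "set L \<subseteq> {Imp F Bot}" "PCL (Imp (conjs L) Bot)" by blast
    have "PCL F"
    proof (rule PCL_prop1[OF L(2)])
      fix v assume h: "peval v (Imp (conjs L) Bot)"
      show "peval v F"
      proof (rule ccontr)
        assume "\<not> peval v F"
        then have "\<forall>B\<in>set L. peval v B" using L(1) by auto
        then show False using h by simp
      qed
    qed
    with nF show False ..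
  qed
  then obtain m0 where m0: "mcs m0" "{Imp F Bot} \<subseteq> m0" using lindenbaum by blast
  have "F \<notin> m0" using mcs_notboth[OF m0(1), of F] m0(2) by blast
  moreover have w0: "(m0, Bot :: 'a fm) \<in> Wc" using m0 by (simp add: Wc_def)
  ultimately have nf: "\<not> forces Nc Vc (m0, Bot) F" using truth[OF w0] by simp
  define W' :: "'a fm set set" where "W' = enc ` Wc"
  define N' :: "'a fm set \<Rightarrow> 'a fm set set set" where "N' = (\<lambda>v. (`) enc ` Nc (inv enc v))"
  define V' :: "'a \<Rightarrow> 'a fm set set" where "V' = (\<lambda>p. enc ` Vc p)"
  have ew0: "enc (m0, Bot) \<in> W'" unfolding W'_def using w0 by (rule imageI)
  have nb: "\<And>v al. v \<in> W' \<Longrightarrow> al \<in> N' v \<Longrightarrow> al \<noteq> {} \<and> al \<subseteq> W'"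
  proof -
    fix v al assume v: "v \<in> W'" and al: "al \<in> N' v"
    then obtain w where w: "w \<in> Wc" "v = enc w" unfolding W'_def by blast
    then have "inv enc v = w" by (simp add: inv_f_f[OF inj_enc])
    then obtain U where U: "U \<in> Nc w" "al = enc ` U" using al unfolding N'_def by auto
    have "U \<noteq> {}" using Nc_nonempty[OF U(1)] .
    moreover have "U \<subseteq> Wc" using Nc_sub[OF U(1)] .
    ultimately show "al \<noteq> {} \<and> al \<subseteq> W'" using U(2) unfolding W'_def by auto
  qed
  have "nbhd_model W' N' V'"
    unfolding nbhd_model_def
  proof (intro conjI)
    show "W' \<noteq> {}" using ew0 by blast
    show "\<forall>x\<in>W'. \<forall>\<alpha>\<in>N' x. \<alpha> \<noteq> {} \<and> \<alpha> \<subseteq> W'"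
    proof (intro ballI)
      fix x \<alpha> assume "x \<in> W'" "\<alpha> \<in> N' x"
      then show "\<alpha> \<noteq> {} \<and> \<alpha> \<subseteq> W'" by (rule nb)
    qed
    show "\<forall>p. V' p \<subseteq> W'" unfolding V'_def W'_def
    proof (intro allI image_mono)
      fix p :: 'a show "Vc p \<subseteq> Wc" unfolding Vc_def Wc_def by blast
    qed
  qed
  then have "valid_in W' N' V' F" by (rule assms)
  then have "forces N' V' (enc (m0, Bot)) F" using ew0 unfolding valid_in_def by blast
  moreover have "forces N' V' (enc (m0, Bot)) F \<longleftrightarrow> forces Nc Vc (m0, Bot) F"
    unfolding N'_def V'_def by (rule forces_inj[OF inj_enc])
  ultimately have "forces Nc Vc (m0, Bot) F" by blast
  with nf show False by blast
qed

end
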